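(* Let $(H,L_H)$ be a right-resolving, regular and follower-separated labeled graph, and let $C$ be a terminal component in $H$. For each $v \in C$ there is a finite path $\gamma$ in $H$ such that $t_H(\gamma) = v$ and the word $L_H(\gamma)$ is synchronizing for $L_H(X_H)$.
   Context: A labeled graph $(H,L_H)$: finite directed graph (vertices $V_H$, edges $E_H$, source/terminal maps $s_H,t_H$) without sinks or sources, labeling $L_H:E_H\to A$, edge shift $X_H$; $L_H$ acts coordinatewise; $Y=L_H(X_H)$. Right-resolving: distinct edges with the same source have distinct labels. $f_H(v)=\{L_H(x): x$ a right-infinite path starting at $v\}$; for $y\in Y$, $F(y)=\{w\in Y[0,\infty): y_{(-\infty,-1]}w\in Y\}$ with $Y[0,\infty)=\{y_{[0,\infty)}:y\in Y\}$. A vertex $v$ is regular if there is $z\in X_H$ whose edge $z_{-1}$ ends at $v$ with $f_H(v)=F(L_H(z))$; the graph is regular if all vertices are. Follower-separated: $f_H(v)=f_H(w)\Rightarrow v=w$. Components: classes of mutually reachable recurrent vertices (a vertex is recurrent if there is a path from it to itself); a component $C$ is terminal if no path leads from $C$ to a different component. A word $w$ of a subshift $Y$ is synchronizing if whenever $u,v$ are words with $uw$ and $wv$ words of $Y$, then $uwv$ is a word of $Y$. *)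

theory Defs
  imports Main
begin

definition labeled_graph ::
  "'v set \<Rightarrow> 'e set \<Rightarrow> ('e \<Rightarrow> 'v) \<Rightarrow> ('e \<Rightarrow> 'v) \<Rightarrow> ('e \<Rightarrow> 'a) \<Rightarrow> bool" where
  "labeled_graph V E s t L \<longleftrightarrow> finite V \<and> finite E \<and>
     (\<forall>e\<in>E. s e \<in> V \<and> t e \<in> V) \<and>
     (\<forall>v\<in>V. (\<exists>e\<in>E. s e = v) \<and> (\<exists>e\<in>E. t e = v))"

definition edge_shift :: "'e set \<Rightarrow> ('e \<Rightarrow> 'v) \<Rightarrow> ('e \<Rightarrow> 'v) \<Rightarrow> (int \<Rightarrow> 'e) set" where
  "edge_shift E s t = {x. (\<forall>i. x i \<in> E) \<and> (\<forall>i. t (x i) = s (x (i + 1)))}"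

definition label_shift ::
  "'e set \<Rightarrow> ('e \<Rightarrow> 'v) \<Rightarrow> ('e \<Rightarrow> 'v) \<Rightarrow> ('e \<Rightarrow> 'a) \<Rightarrow> (int \<Rightarrow> 'a) set" where
  "label_shift E s t L = (\<lambda>x. L \<circ> x) ` edge_shift E s t"

definition right_resolving :: "'e set \<Rightarrow> ('e \<Rightarrow> 'v) \<Rightarrow> ('e \<Rightarrow> 'a) \<Rightarrow> bool" where
  "right_resolving E s L \<longleftrightarrow>
     (\<forall>e1\<in>E. \<forall>e2\<in>E. e1 \<noteq> e2 \<and> s e1 = s e2 \<longrightarrow> L e1 \<noteq> L e2)"

definition right_paths_from :: "'e set \<Rightarrow> ('e \<Rightarrow> 'v) \<Rightarrow> ('e \<Rightarrow> 'v) \<Rightarrow> 'v \<Rightarrow> (nat \<Rightarrow> 'e) set" where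
  "right_paths_from E s t v = {x. (\<forall>n. x n \<in> E) \<and> (\<forall>n. t (x n) = s (x (Suc n))) \<and> s (x 0) = v}"

definition follower_vertex ::
  "'e set \<Rightarrow> ('e \<Rightarrow> 'v) \<Rightarrow> ('e \<Rightarrow> 'v) \<Rightarrow> ('e \<Rightarrow> 'a) \<Rightarrow> 'v \<Rightarrow> (nat \<Rightarrow> 'a) set" where
  "follower_vertex E s t L v = (\<lambda>x. L \<circ> x) ` right_paths_from E s t v"

definition right_part :: "(int \<Rightarrow> 'a) set \<Rightarrow> (nat \<Rightarrow> 'a) set" where
  "right_part Y = (\<lambda>y. \<lambda>n. y (int n)) ` Y"

definition glue :: "(int \<Rightarrow> 'a) \<Rightarrow> (nat \<Rightarrow> 'a) \<Rightarrow> (int \<Rightarrow> 'a)" where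
  "glue y w = (\<lambda>i. if i < 0 then y i else w (nat i))"

definition follower_point :: "(int \<Rightarrow> 'a) set \<Rightarrow> (int \<Rightarrow> 'a) \<Rightarrow> (nat \<Rightarrow> 'a) set" where
  "follower_point Y y = {w \<in> right_part Y. glue y w \<in> Y}"

definition regular_vertex ::
  "'e set \<Rightarrow> ('e \<Rightarrow> 'v) \<Rightarrow> ('e \<Rightarrow> 'v) \<Rightarrow> ('e \<Rightarrow> 'a) \<Rightarrow> 'v \<Rightarrow> bool" where
  "regular_vertex E s t L v \<longleftrightarrow>
     (\<exists>z\<in>edge_shift E s t. t (z (-1)) = v \<and>
        follower_vertex E s t L v = follower_point (label_shift E s t L) (L \<circ> z))"

definition regular_graph ::
  "'v set \<Rightarrow> 'e set \<Rightarrow> ('e \<Rightarrow> 'v) \<Rightarrow> ('e \<Rightarrow> 'v) \<Rightarrow> ('e \<Rightarrow> 'a) \<Rightarrow> bool" where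
  "regular_graph V E s t L \<longleftrightarrow> (\<forall>v\<in>V. regular_vertex E s t L v)"

definition follower_separated ::
  "'v set \<Rightarrow> 'e set \<Rightarrow> ('e \<Rightarrow> 'v) \<Rightarrow> ('e \<Rightarrow> 'v) \<Rightarrow> ('e \<Rightarrow> 'a) \<Rightarrow> bool" where
  "follower_separated V E s t L \<longleftrightarrow>
     (\<forall>v\<in>V. \<forall>w\<in>V. follower_vertex E s t L v = follower_vertex E s t L w \<longrightarrow> v = w)"

definition finite_path :: "'e set \<Rightarrow> ('e \<Rightarrow> 'v) \<Rightarrow> ('e \<Rightarrow> 'v) \<Rightarrow> 'e list \<Rightarrow> bool" where
  "finite_path E s t \<gamma> \<longleftrightarrow> \<gamma> \<noteq> [] \<and> set \<gamma> \<subseteq> E \<and>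
     (\<forall>i. Suc i < length \<gamma> \<longrightarrow> t (\<gamma> ! i) = s (\<gamma> ! Suc i))"

definition reach :: "'e set \<Rightarrow> ('e \<Rightarrow> 'v) \<Rightarrow> ('e \<Rightarrow> 'v) \<Rightarrow> 'v \<Rightarrow> 'v \<Rightarrow> bool" where
  "reach E s t u w \<longleftrightarrow> u = w \<or>
     (\<exists>\<gamma>. finite_path E s t \<gamma> \<and> s (hd \<gamma>) = u \<and> t (last \<gamma>) = w)"

definition recurrent :: "'v set \<Rightarrow> 'e set \<Rightarrow> ('e \<Rightarrow> 'v) \<Rightarrow> ('e \<Rightarrow> 'v) \<Rightarrow> 'v \<Rightarrow> bool" where
  "recurrent V E s t v \<longleftrightarrow> v \<in> V \<and>
     (\<exists>\<gamma>. finite_path E s t \<gamma> \<and> s (hd \<gamma>) = v \<and> t (last \<gamma>) = v)"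

definition component :: "'v set \<Rightarrow> 'e set \<Rightarrow> ('e \<Rightarrow> 'v) \<Rightarrow> ('e \<Rightarrow> 'v) \<Rightarrow> 'v set \<Rightarrow> bool" where
  "component V E s t C \<longleftrightarrow> (\<exists>v. recurrent V E s t v \<and>
     C = {w. recurrent V E s t w \<and> reach E s t v w \<and> reach E s t w v})"

definition terminal_component :: "'v set \<Rightarrow> 'e set \<Rightarrow> ('e \<Rightarrow> 'v) \<Rightarrow> ('e \<Rightarrow> 'v) \<Rightarrow> 'v set \<Rightarrow> bool" where
  "terminal_component V E s t C \<longleftrightarrow> component V E s t C \<and>
     (\<forall>D. component V E s t D \<and> D \<noteq> C \<longrightarrow> \<not> (\<exists>u\<in>C. \<exists>w\<in>D. reach E s t u w))"

definition is_word :: "(int \<Rightarrow> 'a) set \<Rightarrow> 'a list \<Rightarrow> bool" where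
  "is_word Y w \<longleftrightarrow> (\<exists>y\<in>Y. \<exists>i::int. w = map (\<lambda>k. y (i + int k)) [0..<length w])"

definition synchronizing :: "(int \<Rightarrow> 'a) set \<Rightarrow> 'a list \<Rightarrow> bool" where
  "synchronizing Y w \<longleftrightarrow> is_word Y w \<and>
     (\<forall>u v. is_word Y (u @ w) \<and> is_word Y (w @ v) \<longrightarrow> is_word Y (u @ w @ v))"

end

theory Submission
  imports Defs
begin

lemma pigeon_down:
  fixes P :: "nat \<Rightarrow> 'a \<Rightarrow> bool"
  assumes "finite A" and ex: "\<And>n. \<exists>x\<in>A. P n x"
    and down: "\<And>n m x. P n x \<Longrightarrow> m \<le> n \<Longrightarrow> P m x"
  shows "\<exists>x\<in>A. \<forall>n. P n x"
proof (rule ccontr)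
  assume "\<not> ?thesis"
  then have "\<forall>x\<in>A. \<exists>n. \<not> P n x" by blast
  then obtain g where g: "\<And>x. x \<in> A \<Longrightarrow> \<not> P (g x) x" by (rule bchoice[THEN exE]) blast
  define N where "N = Max (g ` A)"
  obtain x where x: "x \<in> A" "P N x" using ex by blast
  have "g x \<le> N" unfolding N_def using assms(1) x(1) by simp
  then have "P (g x) x" using down x(2) by blast
  then show False using g x(1) by blast
qed

definition kgood :: "'e set \<Rightarrow> (nat \<Rightarrow> 'e \<Rightarrow> bool) \<Rightarrow> (nat \<Rightarrow> 'e \<Rightarrow> 'e \<Rightarrow> bool) \<Rightarrow> nat \<Rightarrow> 'e \<Rightarrow> bool" where
  "kgood E Q R k e \<longleftrightarrow> (\<forall>n. \<exists>f. f 0 = e \<and> (\<forall>i<Suc n. f i \<in> E \<and> Q (k+i) (f i)) \<and> (\<forall>i<n. R (k+i) (f i) (f (Suc i))))"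

lemma kgood_step:
  assumes "finite E" "kgood E Q R k e"
  shows "\<exists>e'\<in>E. R k e e' \<and> kgood E Q R (Suc k) e'"
proof -
  let ?P = "\<lambda>n e'. R k e e' \<and> (\<exists>f. f 0 = e' \<and> (\<forall>i<Suc n. f i \<in> E \<and> Q (Suc k+i) (f i)) \<and> (\<forall>i<n. R (Suc k+i) (f i) (f (Suc i))))"
  have "\<exists>x\<in>E. \<forall>n. ?P n x"
  proof (rule pigeon_down[OF assms(1)])
    fix n
    obtain f where f: "f 0 = e" "\<forall>i<Suc (Suc n). f i \<in> E \<and> Q (k+i) (f i)" "\<forall>i<Suc n. R (k+i) (f i) (f (Suc i))"
      using assms(2) unfolding kgood_def by blast
    define h where "h = (\<lambda>i. f (Suc i))"
    have 1: "f 1 \<in> E" using f(2) by auto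
    have 2: "R k e (f 1)" using f(1) f(3)[rule_format, of 0] by simp
    have 3: "h 0 = f 1" unfolding h_def by simp
    have 4: "\<forall>i<Suc n. h i \<in> E \<and> Q (Suc k + i) (h i)"
    proof (intro allI impI)
      fix i assume "i < Suc n"
      then have "Suc i < Suc (Suc n)" by simp
      then show "h i \<in> E \<and> Q (Suc k + i) (h i)" using f(2)[rule_format, of "Suc i"] unfolding h_def by simp
    qed
    have 5: "\<forall>i<n. R (Suc k + i) (h i) (h (Suc i))"
    proof (intro allI impI)
      fix i assume "i < n"
      then have "Suc i < Suc n" by simp
      then show "R (Suc k + i) (h i) (h (Suc i))" using f(3)[rule_format, of "Suc i"] unfolding h_def by simp
    qed
    have "?P n (f 1)" using 2 3 4 5 by (intro conjI exI[where x=h]) simp_all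
    then show "\<exists>x\<in>E. ?P n x" using 1 by blast
  next
    fix n m x assume a: "?P n x" "m \<le> n"
    then obtain f where f: "f 0 = x" "\<forall>i<Suc n. f i \<in> E \<and> Q (Suc k+i) (f i)" "\<forall>i<n. R (Suc k+i) (f i) (f (Suc i))"
      by blast
    have "\<forall>i<Suc m. f i \<in> E \<and> Q (Suc k+i) (f i)"
    proof (intro allI impI)
      fix i assume "i < Suc m" with a(2) have "i < Suc n" by simp
      then show "f i \<in> E \<and> Q (Suc k+i) (f i)" using f(2) by blast
    qed
    moreover have "\<forall>i<m. R (Suc k+i) (f i) (f (Suc i))"
    proof (intro allI impI)
      fix i assume "i < m" with a(2) have "i < n" by simp
      then show "R (Suc k+i) (f i) (f (Suc i))" using f(3) by blast
    qed
    ultimately show "?P m x" using f(1) a(1) by (intro conjI exI[where x=f]) simp_all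
  qed
  then obtain x where x: "x \<in> E" "\<forall>n. ?P n x" by blast
  have "R k e x" using x(2) by blast
  moreover have "kgood E Q R (Suc k) x" unfolding kgood_def using x(2) by blast
  ultimately show ?thesis using x(1) by blast
qed

lemma konig:
  assumes fin: "finite E"
    and H: "\<And>n. \<exists>f. S (f 0) \<and> (\<forall>i<Suc n. f i \<in> E \<and> Q i (f i)) \<and> (\<forall>i<n. R i (f i) (f (Suc i)))"
  shows "\<exists>f. S (f 0) \<and> (\<forall>i. f i \<in> E \<and> Q i (f i) \<and> R i (f i) (f (Suc i)))"
proof -
  let ?P = "\<lambda>n e. S e \<and> (\<exists>f. f 0 = e \<and> (\<forall>i<Suc n. f i \<in> E \<and> Q (0+i) (f i)) \<and> (\<forall>i<n. R (0+i) (f i) (f (Suc i))))"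
  have "\<exists>x\<in>E. \<forall>n. ?P n x"
  proof (rule pigeon_down[OF fin])
    fix n
    obtain f where f: "S (f 0)" "\<forall>i<Suc n. f i \<in> E \<and> Q i (f i)" "\<forall>i<n. R i (f i) (f (Suc i))"
      using H by blast
    have "?P n (f 0)" using f by (intro conjI exI[where x=f]) simp_all
    then show "\<exists>x\<in>E. ?P n x" using f(2) by auto
  next
    fix n m x assume a: "?P n x" "m \<le> n"
    then obtain f where f: "f 0 = x" "\<forall>i<Suc n. f i \<in> E \<and> Q (0+i) (f i)" "\<forall>i<n. R (0+i) (f i) (f (Suc i))"
      by blast
    have "\<forall>i<Suc m. f i \<in> E \<and> Q (0+i) (f i)"
    proof (intro allI impI)
      fix i assume "i < Suc m" with a(2) have "i < Suc n" by simp
      then show "f i \<in> E \<and> Q (0+i) (f i)" using f(2) by blast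
    qed
    moreover have "\<forall>i<m. R (0+i) (f i) (f (Suc i))"
    proof (intro allI impI)
      fix i assume "i < m" with a(2) have "i < n" by simp
      then show "R (0+i) (f i) (f (Suc i))" using f(3) by blast
    qed
    ultimately show "?P m x" using f(1) a(1) by (intro conjI exI[where x=f]) simp_all
  qed
  then obtain e0 where e0': "e0 \<in> E" "\<forall>n. ?P n e0" by blast
  have e0: "e0 \<in> E" "S e0" "kgood E Q R 0 e0" using e0' unfolding kgood_def by blast+
  define g where "g = rec_nat e0 (\<lambda>k e. SOME e'. e' \<in> E \<and> R k e e' \<and> kgood E Q R (Suc k) e')"
  have g0: "g 0 = e0" unfolding g_def by simp
  have gS: "g (Suc k) = (SOME e'. e' \<in> E \<and> R k (g k) e' \<and> kgood E Q R (Suc k) e')" for k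
    unfolding g_def by simp
  have gg: "kgood E Q R k (g k) \<and> (R k (g k) (g (Suc k)))" for k
  proof (induction k)
    case 0
    have ex: "\<exists>e'. e' \<in> E \<and> R 0 (g 0) e' \<and> kgood E Q R (Suc 0) e'" using kgood_step[OF fin e0(3)] g0 by auto
    show ?case using someI_ex[OF ex] gS[of 0] e0 g0 by simp
  next
    case (Suc k)
    have ex1: "\<exists>e'. e' \<in> E \<and> R k (g k) e' \<and> kgood E Q R (Suc k) e'" using kgood_step[OF fin] Suc by blast
    have a: "kgood E Q R (Suc k) (g (Suc k))" using someI_ex[OF ex1] gS[of k] by simp
    have ex2: "\<exists>e'. e' \<in> E \<and> R (Suc k) (g (Suc k)) e' \<and> kgood E Q R (Suc (Suc k)) e'" using kgood_step[OF fin a] by blast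
    show ?case using someI_ex[OF ex2] gS[of "Suc k"] a by simp
  qed
  have "g i \<in> E \<and> Q i (g i)" for i
  proof -
    obtain f where "f 0 = g i" "\<forall>j<Suc 0. f j \<in> E \<and> Q (i+j) (f j)"
      using gg[of i] unfolding kgood_def by blast
    then show ?thesis by auto
  qed
  then show ?thesis using gg g0 e0 by blast
qed

lemma fp_Cons:
  "finite_path E s t (e # g) \<longleftrightarrow> e \<in> E \<and> (g = [] \<or> (finite_path E s t g \<and> t e = s (hd g)))"
proof (cases g)
  case Nil
  then show ?thesis by (simp add: finite_path_def)
next
  case (Cons a g')
  show ?thesis
  proof
    assume H: "finite_path E s t (e # g)"
    have "Suc 0 < length (e # g)" using Cons by simp
    then have "t ((e # g) ! 0) = s ((e # g) ! Suc 0)" using H unfolding finite_path_def by blast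
    then have "t e = s (hd g)" using Cons by simp
    moreover have "finite_path E s t g" unfolding finite_path_def
    proof (intro conjI allI impI)
      show "g \<noteq> []" using Cons by simp
      show "set g \<subseteq> E" using H unfolding finite_path_def by simp
      fix i assume "Suc i < length g"
      then have "Suc (Suc i) < length (e # g)" by simp
      then have "t ((e # g) ! Suc i) = s ((e # g) ! Suc (Suc i))" using H unfolding finite_path_def by blast
      then show "t (g ! i) = s (g ! Suc i)" by simp
    qed
    ultimately show "e \<in> E \<and> (g = [] \<or> (finite_path E s t g \<and> t e = s (hd g)))"
      using H unfolding finite_path_def by simp
  next
    assume H: "e \<in> E \<and> (g = [] \<or> (finite_path E s t g \<and> t e = s (hd g)))"
    then have H2: "finite_path E s t g" "t e = s (hd g)" using Cons by auto
    show "finite_path E s t (e # g)" unfolding finite_path_def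
    proof (intro conjI allI impI)
      show "e # g \<noteq> []" by simp
      show "set (e # g) \<subseteq> E" using H H2(1) unfolding finite_path_def by simp
      fix i assume i: "Suc i < length (e # g)"
      show "t ((e # g) ! i) = s ((e # g) ! Suc i)"
      proof (cases i)
        case 0
        then show ?thesis using H2(2) Cons by simp
      next
        case (Suc j)
        then have "Suc j < length g" using i by simp
        then show ?thesis using H2(1) Suc unfolding finite_path_def by simp
      qed
    qed
  qed
qed

lemma fp_append:
  assumes "g \<noteq> []" "d \<noteq> []"
  shows "finite_path E s t (g @ d) \<longleftrightarrow> finite_path E s t g \<and> finite_path E s t d \<and> t (last g) = s (hd d)"
  using assms
proof (induction g)
  case Nil
  then show ?case by simp
next
  case (Cons a g)
  show ?case
  proof (cases g)
    case Nil
    then show ?thesis using Cons.prems by (simp add: fp_Cons)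
  next
    case (Cons b g')
    then have "g \<noteq> []" by simp
    then show ?thesis using Cons.IH[OF _ Cons.prems(2)] Cons.prems(2) by (auto simp: fp_Cons)
  qed
qed

lemma fp_nonempty: "finite_path E s t g \<Longrightarrow> g \<noteq> []"
  by (simp add: finite_path_def)

lemma fp_set: "finite_path E s t g \<Longrightarrow> set g \<subseteq> E"
  by (simp add: finite_path_def)

lemma fp_single: "finite_path E s t [e] \<longleftrightarrow> e \<in> E"
  by (simp add: fp_Cons)

lemma rr_unique:
  assumes rr: "right_resolving E s L"
  shows "finite_path E s t d \<Longrightarrow> finite_path E s t d' \<Longrightarrow> s (hd d) = s (hd d') \<Longrightarrow> map L d = map L d' \<Longrightarrow> d = d'"
proof (induction d arbitrary: d')
  case Nil
  then show ?case by (simp add: finite_path_def)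
next
  case (Cons a d)
  obtain a' d2 where d': "d' = a' # d2" using Cons.prems(4) by (cases d') auto
  have la: "L a = L a'" and ld: "map L d = map L d2" using Cons.prems(4) d' by auto
  have aE: "a \<in> E" "a' \<in> E" using Cons.prems(1,2) d' by (auto simp: fp_Cons)
  have "s a = s a'" using Cons.prems(3) d' by simp
  then have aa: "a = a'" using rr aE la unfolding right_resolving_def by blast
  show ?case
  proof (cases d)
    case Nil
    then show ?thesis using ld d' aa by simp
  next
    case (Cons b d3)
    then have "d2 \<noteq> []" using ld by auto
    then have "finite_path E s t d" "finite_path E s t d2" "t a = s (hd d)" "t a' = s (hd d2)"
      using Cons.prems(1,2) Cons d' by (auto simp: fp_Cons)
    then have "d = d2" using Cons.IH[of d2] ld aa by simp
    then show ?thesis using aa d' by simp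
  qed
qed

lemma fp_of_fun:
  assumes "0 < n" "\<And>i. i < n \<Longrightarrow> f i \<in> E" "\<And>i. Suc i < n \<Longrightarrow> t (f i) = s (f (Suc i))"
  shows "finite_path E s t (map f [0..<n])"
  using assms unfolding finite_path_def by auto

lemma fp_take:
  assumes "finite_path E s t g" "0 < n"
  shows "finite_path E s t (take n g)"
proof (cases "n < length g")
  case True
  have "g = take n g @ drop n g" by simp
  moreover have "take n g \<noteq> []" "drop n g \<noteq> []" using True assms(2) by auto
  ultimately show ?thesis using assms(1) fp_append[of "take n g" "drop n g" E s t] by simp
next
  case False
  then show ?thesis using assms by simp
qed

lemma fp_drop:
  assumes "finite_path E s t g" "n < length g"
  shows "finite_path E s t (drop n g)"
proof (cases "n = 0")
  case False
  have "g = take n g @ drop n g" by simp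
  moreover have "take n g \<noteq> []" "drop n g \<noteq> []" using False assms(2) by auto
  ultimately show ?thesis using assms(1) fp_append[of "take n g" "drop n g" E s t] by simp
qed (use assms in simp)

definition Tset :: "'e set \<Rightarrow> ('e \<Rightarrow> 'v) \<Rightarrow> ('e \<Rightarrow> 'v) \<Rightarrow> ('e \<Rightarrow> 'a) \<Rightarrow> 'a list \<Rightarrow> 'v set" where
  "Tset E s t L W = {t (last g) | g. finite_path E s t g \<and> map L g = W}"

lemma Tset_sub:
  assumes "labeled_graph V E s t L"
  shows "Tset E s t L W \<subseteq> V"
proof
  fix u assume "u \<in> Tset E s t L W"
  then obtain g where g: "u = t (last g)" "finite_path E s t g" unfolding Tset_def by blast
  then have "last g \<in> E" using fp_set[OF g(2)] fp_nonempty[OF g(2)] last_in_set by blast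
  moreover have "\<forall>e\<in>E. s e \<in> V \<and> t e \<in> V" using assms unfolding labeled_graph_def by simp
  ultimately show "u \<in> V" using g(1) by blast
qed

lemma Tset_finite:
  assumes "labeled_graph V E s t L"
  shows "finite (Tset E s t L W)"
proof -
  have "finite V" using assms unfolding labeled_graph_def by simp
  then show ?thesis using finite_subset[OF Tset_sub[OF assms]] by blast
qed

lemma is_word_path:
  assumes "is_word (label_shift E s t L) w"
  obtains x i where "x \<in> edge_shift E s t" "w = map (\<lambda>k. L (x (i + int k))) [0..<length w]"
  using assms unfolding is_word_def label_shift_def by auto

lemma win_nth:
  assumes "w = map (\<lambda>k. f (i + int k)) [0..<length w]" "k < length w"
  shows "w ! k = f (i + int k)"
proof -
  have h: "map (\<lambda>k. f (i + int k)) [0..<length w] ! k = f (i + int k)" using assms(2) by simp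
  show ?thesis by (subst assms(1)) (rule h)
qed

lemma edge_shift_fp:
  assumes "x \<in> edge_shift E s t" "0 < n"
  shows "finite_path E s t (map (\<lambda>k. x (i + int k)) [0..<n])"
proof (rule fp_of_fun[OF assms(2)])
  fix k show "x (i + int k) \<in> E" using assms(1) unfolding edge_shift_def by blast
next
  fix k assume "Suc k < n"
  have "t (x (i + int k)) = s (x (i + int k + 1))" using assms(1) unfolding edge_shift_def by blast
  moreover have "i + int (Suc k) = i + int k + 1" by simp
  ultimately show "t (x (i + int k)) = s (x (i + int (Suc k)))" by (simp only:)
qed

lemma sync_magic:
  fixes W :: "'a list"
  assumes Wne: "W \<noteq> []"
    and magic: "\<And>d. finite_path E s t d \<Longrightarrow> map L d = W \<Longrightarrow> t (last d) = w"
    and isw: "is_word (label_shift E s t L) W"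
  shows "synchronizing (label_shift E s t L) W"
  unfolding synchronizing_def
proof (intro conjI allI impI)
  show "is_word (label_shift E s t L) W" by fact
  fix u v
  assume H: "is_word (label_shift E s t L) (u @ W) \<and> is_word (label_shift E s t L) (W @ v)"
  obtain x i where x: "x \<in> edge_shift E s t" "u @ W = map (\<lambda>k. L (x (i + int k))) [0..<length (u @ W)]"
    using H is_word_path by blast
  obtain x' i' where x': "x' \<in> edge_shift E s t" "W @ v = map (\<lambda>k. L (x' (i' + int k))) [0..<length (W @ v)]"
    using H is_word_path by blast
  define lu where "lu = length u"
  define lw where "lw = length W"
  have lw0: "0 < lw" using Wne lw_def by simp
  define d where "d = map (\<lambda>k. x (i + int lu + int k)) [0..<lw]"
  have fd: "finite_path E s t d" unfolding d_def using edge_shift_fp[OF x(1) lw0] by simp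
  have "map L d = W"
  proof (rule nth_equalityI)
    show "length (map L d) = length W" by (simp add: d_def lw_def)
    fix k assume "k < length (map L d)"
    then have k: "k < lw" by (simp add: d_def)
    have "W ! k = L (x (i + int lu + int k))"
      using win_nth[OF x(2), of "lu + k"] k by (simp add: lu_def lw_def nth_append add.assoc)
    then show "map L d ! k = W ! k" using k by (simp add: d_def)
  qed
  then have tw: "t (x (i + int lu + int (lw - 1))) = w" using magic[OF fd] lw0
    by (simp add: d_def last_map)
  define d' where "d' = map (\<lambda>k. x' (i' + int k)) [0..<lw]"
  have fd': "finite_path E s t d'" unfolding d'_def using edge_shift_fp[OF x'(1) lw0] by simp
  have "map L d' = W"
  proof (rule nth_equalityI)
    show "length (map L d') = length W" by (simp add: d'_def lw_def)
    fix k assume "k < length (map L d')"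
    then have k: "k < lw" by (simp add: d'_def)
    have "(W @ v) ! k = L (x' (i' + int k))"
      using win_nth[OF x'(2)] k lw_def by simp
    then show "map L d' ! k = W ! k" using k by (simp add: d'_def lw_def nth_append)
  qed
  then have tw': "t (x' (i' + int (lw - 1))) = w" using magic[OF fd'] lw0
    by (simp add: d'_def last_map)
  define j where "j = i + int lu + int lw"
  define j' where "j' = i' + int lw"
  define z where "z = (\<lambda>k. if k < j then x k else x' (k - j + j'))"
  have z: "z \<in> edge_shift E s t"
    unfolding edge_shift_def
  proof (intro CollectI conjI allI)
    fix k
    show "z k \<in> E" using x(1) x'(1) unfolding z_def edge_shift_def by auto
    show "t (z k) = s (z (k + 1))"
    proof (cases "k + 1 < j")
      case True
      then show ?thesis using x(1) unfolding z_def edge_shift_def by auto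
    next
      case False
      show ?thesis
      proof (cases "k + 1 = j")
        case True
        have "k = i + int lu + int (lw - 1)" using True lw0 j_def by simp
        then have "t (z k) = w" using tw True unfolding z_def by simp
        moreover have "s (z (k + 1)) = s (x' j')" using True unfolding z_def by simp
        moreover have "t (x' (j' - 1)) = s (x' (j' - 1 + 1))" using x'(1) unfolding edge_shift_def by blast
        then have "t (x' (j' - 1)) = s (x' j')" by simp
        moreover have "j' - 1 = i' + int (lw - 1)" using lw0 j'_def by simp
        ultimately show ?thesis using tw' by simp
      next
        case False
        then have "\<not> k < j" "\<not> k + 1 < j" using \<open>\<not> k + 1 < j\<close> by auto
        then show ?thesis using x'(1) unfolding z_def edge_shift_def by (simp add: algebra_simps)
      qed
    qed
  qed
  have "u @ W @ v = map (\<lambda>k. (L \<circ> z) (i + int k)) [0..<length (u @ W @ v)]"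
  proof (rule nth_equalityI)
    show "length (u @ W @ v) = length (map (\<lambda>k. (L \<circ> z) (i + int k)) [0..<length (u @ W @ v)])" by simp
    fix k assume k: "k < length (u @ W @ v)"
    show "(u @ W @ v) ! k = map (\<lambda>k. (L \<circ> z) (i + int k)) [0..<length (u @ W @ v)] ! k"
    proof (cases "k < lu + lw")
      case True
      have "(u @ W @ v) ! k = ((u @ W) @ v) ! k" by simp
      also have "\<dots> = (u @ W) ! k" using True lu_def lw_def by (simp add: nth_append del: append_assoc)
      also have "\<dots> = L (x (i + int k))" using win_nth[OF x(2)] True lu_def lw_def by simp
      also have "\<dots> = (L \<circ> z) (i + int k)" using True unfolding z_def j_def by simp
      finally show ?thesis using k by simp
    next
      case False
      define k' where "k' = k - lu - lw"
      have kk: "k = lu + lw + k'" using False k'_def by simp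
      have "(u @ W @ v) ! k = v ! k'" using kk by (simp add: lu_def lw_def nth_append)
      also have "\<dots> = (W @ v) ! (lw + k')" by (simp add: lw_def nth_append)
      also have "\<dots> = L (x' (i' + int (lw + k')))"
      proof -
        have "lw + k' < length (W @ v)" using k kk lu_def lw_def by simp
        then show ?thesis using win_nth[OF x'(2)] by blast
      qed
      also have "\<dots> = (L \<circ> z) (i + int k)" using kk unfolding z_def j_def j'_def by (simp add: algebra_simps)
      finally show ?thesis using k by simp
    qed
  qed
  moreover have "L \<circ> z \<in> label_shift E s t L" using z unfolding label_shift_def by blast
  ultimately show "is_word (label_shift E s t L) (u @ W @ v)" unfolding is_word_def by blast
qed

lemma fp_split:
  assumes "finite_path E s t d" "map L d = A @ B" "A \<noteq> []" "B \<noteq> []"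
  shows "\<exists>d1 d2. d = d1 @ d2 \<and> finite_path E s t d1 \<and> finite_path E s t d2 \<and> map L d1 = A \<and> map L d2 = B
            \<and> t (last d1) = s (hd d2)"
proof -
  define d1 where "d1 = take (length A) d"
  define d2 where "d2 = drop (length A) d"
  have len: "length d = length A + length B" using assms(2) by (metis length_append length_map)
  have dd: "d = d1 @ d2" unfolding d1_def d2_def by simp
  have ne: "d1 \<noteq> []" "d2 \<noteq> []" using assms(3,4) len unfolding d1_def d2_def by auto
  have "finite_path E s t d1 \<and> finite_path E s t d2 \<and> t (last d1) = s (hd d2)"
    using fp_append[OF ne, of E s t, THEN iffD1] assms(1) dd by simp
  moreover have "map L d1 = A" "map L d2 = B"
    using assms(2) unfolding d1_def d2_def by (simp_all add: take_map[symmetric] drop_map[symmetric])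
  ultimately show ?thesis using dd by blast
qed

lemma reach_trans:
  assumes "reach E s t a b" "reach E s t b c"
  shows "reach E s t a c"
proof -
  consider "a = b" | "b = c" | g d where "finite_path E s t g" "s (hd g) = a" "t (last g) = b"
      "finite_path E s t d" "s (hd d) = b" "t (last d) = c"
    using assms unfolding reach_def by blast
  then show ?thesis
  proof cases
    case 1 then show ?thesis using assms(2) by simp
  next
    case 2 then show ?thesis using assms(1) by simp
  next
    case 3
    have ne: "g \<noteq> []" "d \<noteq> []" using 3 fp_nonempty by blast+
    have "finite_path E s t (g @ d)" by (rule fp_append[OF ne, THEN iffD2]) (use 3 in simp)
    moreover have "s (hd (g @ d)) = a" "t (last (g @ d)) = c" using 3 ne by auto
    ultimately show ?thesis unfolding reach_def by blast
  qed
qed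

abbreviation fol where "fol E s t L v \<equiv> follower_vertex E s t L v"

lemma fol_mono:
  assumes rr: "right_resolving E s L"
    and d: "finite_path E s t d" and r: "finite_path E s t r"
    and lab: "map L d = map L r" and sub: "fol E s t L (s (hd d)) \<subseteq> fol E s t L (s (hd r))"
  shows "fol E s t L (t (last d)) \<subseteq> fol E s t L (t (last r))"
proof
  fix y assume "y \<in> fol E s t L (t (last d))"
  then obtain p where p: "p \<in> right_paths_from E s t (t (last d))" "y = L \<circ> p"
    unfolding follower_vertex_def by blast
  have pE: "\<And>n. p n \<in> E" and pt: "\<And>n. t (p n) = s (p (Suc n))" and p0: "s (p 0) = t (last d)"
    using p(1) unfolding right_paths_from_def by auto
  define n where "n = length d"
  have n0: "0 < n" using fp_nonempty[OF d] n_def by simp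
  define p1 where "p1 = (\<lambda>i. if i < n then d ! i else p (i - n))"
  have "p1 \<in> right_paths_from E s t (s (hd d))"
    unfolding right_paths_from_def
  proof (intro CollectI conjI allI)
    fix i
    show "p1 i \<in> E" using fp_set[OF d] pE unfolding p1_def n_def by auto
    show "t (p1 i) = s (p1 (Suc i))"
    proof (cases "Suc i < n")
      case True
      then show ?thesis using d unfolding p1_def finite_path_def n_def by simp
    next
      case False
      show ?thesis
      proof (cases "Suc i = n")
        case True
        then have "i = length d - 1" "i < n" unfolding n_def by simp_all
        then have "p1 i = last d" unfolding p1_def using n0 by (simp add: last_conv_nth n_def)
        moreover have "p1 (Suc i) = p 0" using True unfolding p1_def by simp
        ultimately show ?thesis using p0 by simp
      next
        case False
        then have "\<not> i < n" "\<not> Suc i < n" using \<open>\<not> Suc i < n\<close> by auto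
        moreover have "Suc i - n = Suc (i - n)" using calculation by simp
        ultimately show ?thesis using pt unfolding p1_def by simp
      qed
    qed
  next
    show "s (p1 0) = s (hd d)" using n0 unfolding p1_def n_def by (simp add: hd_conv_nth)
  qed
  then have "L \<circ> p1 \<in> fol E s t L (s (hd r))" using sub unfolding follower_vertex_def by blast
  then obtain p2 where p2: "p2 \<in> right_paths_from E s t (s (hd r))" "L \<circ> p1 = L \<circ> p2"
    unfolding follower_vertex_def by blast
  have p2E: "\<And>n. p2 n \<in> E" and p2t: "\<And>n. t (p2 n) = s (p2 (Suc n))" and p20: "s (p2 0) = s (hd r)"
    using p2(1) unfolding right_paths_from_def by auto
  define r' where "r' = map p2 [0..<n]"
  have fr': "finite_path E s t r'" unfolding r'_def using fp_of_fun[OF n0, of p2] p2E p2t by blast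
  have "map L r' = map L d"
  proof (rule nth_equalityI)
    show "length (map L r') = length (map L d)" by (simp add: r'_def n_def)
    fix i assume "i < length (map L r')"
    then have i: "i < n" by (simp add: r'_def)
    have "L (p2 i) = L (p1 i)" using p2(2) by (metis comp_apply)
    then show "map L r' ! i = map L d ! i" using i unfolding r'_def p1_def n_def by simp
  qed
  moreover have "s (hd r') = s (hd r)" using n0 p20 unfolding r'_def by (simp add: hd_map)
  ultimately have rr': "r' = r" using rr_unique[OF rr fr' r] lab by simp
  have "last r' = p2 (n - 1)" using n0 unfolding r'_def by (simp add: last_map)
  then have lastr: "last r = p2 (n - 1)" using rr' by simp
  define p3 where "p3 = (\<lambda>i. p2 (i + n))"
  have "p3 \<in> right_paths_from E s t (t (last r))"
    unfolding right_paths_from_def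
  proof (intro CollectI conjI allI)
    fix i
    show "p3 i \<in> E" using p2E unfolding p3_def by simp
    show "t (p3 i) = s (p3 (Suc i))" using p2t unfolding p3_def by simp
  next
    have "Suc (n - 1) = n" using n0 by simp
    then show "s (p3 0) = t (last r)" using p2t[of "n - 1"] lastr unfolding p3_def by simp
  qed
  moreover have "L \<circ> p3 = y"
  proof
    fix i
    have "L (p2 (i + n)) = L (p1 (i + n))" using p2(2) by (metis comp_apply)
    then show "(L \<circ> p3) i = y i" unfolding p3_def p1_def p(2) by simp
  qed
  ultimately show "y \<in> fol E s t L (t (last r))" unfolding follower_vertex_def by blast
qed

lemma no_extend:
  assumes fin: "finite E"
    and p: "p \<in> right_paths_from E s t c" and notin: "L \<circ> p \<notin> fol E s t L u"
  shows "\<exists>m>0. \<not> (\<exists>d. finite_path E s t d \<and> s (hd d) = u \<and> map L d = map (L \<circ> p) [0..<m])"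
proof (rule ccontr)
  assume "\<not> ?thesis"
  then have H: "\<And>m. 0 < m \<Longrightarrow> \<exists>d. finite_path E s t d \<and> s (hd d) = u \<and> map L d = map (L \<circ> p) [0..<m]"
    by blast
  have "\<exists>g. s (g 0) = u \<and> (\<forall>i. g i \<in> E \<and> L (g i) = L (p i) \<and> t (g i) = s (g (Suc i)))"
  proof (rule konig[OF fin, where S="\<lambda>e. s e = u" and Q="\<lambda>i e. L e = L (p i)" and R="\<lambda>i a b. t a = s b"])
    fix n
    obtain d where d: "finite_path E s t d" "s (hd d) = u" "map L d = map (L \<circ> p) [0..<Suc n]"
      using H[of "Suc n"] by blast
    have len: "length d = Suc n" using d(3) by (metis length_map length_upt minus_nat.diff_0)
    have "s ((\<lambda>i. d ! i) 0) = u" using d(2) fp_nonempty[OF d(1)] by (simp add: hd_conv_nth)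
    moreover have "\<forall>i<Suc n. d ! i \<in> E \<and> L (d ! i) = L (p i)"
    proof (intro allI impI conjI)
      fix i assume i: "i < Suc n"
      show "d ! i \<in> E" using fp_set[OF d(1)] i len by auto
      have "map L d ! i = map (L \<circ> p) [0..<Suc n] ! i" using d(3) by (simp del: upt_Suc)
      then show "L (d ! i) = L (p i)" using i len by (simp del: upt_Suc)
    qed
    moreover have "\<forall>i<n. t (d ! i) = s (d ! Suc i)" using d(1) len unfolding finite_path_def by simp
    ultimately show "\<exists>f. s (f 0) = u \<and> (\<forall>i<Suc n. f i \<in> E \<and> L (f i) = L (p i)) \<and> (\<forall>i<n. t (f i) = s (f (Suc i)))"
      by blast
  qed
  then obtain g where g: "s (g 0) = u" "\<And>i. g i \<in> E" "\<And>i. L (g i) = L (p i)" "\<And>i. t (g i) = s (g (Suc i))"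
    by blast
  have "g \<in> right_paths_from E s t u" unfolding right_paths_from_def using g by blast
  moreover have "L \<circ> g = L \<circ> p" using g(3) by (simp add: comp_def)
  ultimately show False using notin unfolding follower_vertex_def by (metis image_eqI)
qed

definition zw :: "(int \<Rightarrow> 'e) \<Rightarrow> ('e \<Rightarrow> 'a) \<Rightarrow> nat \<Rightarrow> 'a list" where
  "zw z L n = map (\<lambda>j. L (z (int j - int n))) [0..<n]"

lemma back_fol:
  assumes fin: "finite E" and z: "z \<in> edge_shift E s t"
    and reg: "fol E s t L (t (z (-1))) = follower_point (label_shift E s t L) (L \<circ> z)"
    and allN: "\<And>n. 0 < n \<Longrightarrow> u \<in> Tset E s t L (zw z L n)"
  shows "fol E s t L u \<subseteq> fol E s t L (t (z (-1)))"
proof -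
  have "\<exists>b. t (b 0) = u \<and> (\<forall>i. b i \<in> E \<and> L (b i) = L (z (- int i - 1)) \<and> t (b (Suc i)) = s (b i))"
  proof (rule konig[OF fin, where S="\<lambda>e. t e = u" and Q="\<lambda>i e. L e = L (z (- int i - 1))" and R="\<lambda>i a b. t b = s a"])
    fix n
    obtain d where d: "finite_path E s t d" "map L d = zw z L (Suc n)" "u = t (last d)"
      using allN[of "Suc n"] unfolding Tset_def by blast
    have len: "length d = Suc n" using d(2) unfolding zw_def by (metis length_map length_upt minus_nat.diff_0)
    have "d \<noteq> []" using len by auto
    then have "t ((\<lambda>i. d ! (n - i)) 0) = u" using d(3) len by (simp add: last_conv_nth)
    moreover have "\<forall>i<Suc n. d ! (n - i) \<in> E \<and> L (d ! (n - i)) = L (z (- int i - 1))"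
    proof (intro allI impI conjI)
      fix i assume i: "i < Suc n"
      show "d ! (n - i) \<in> E" using fp_set[OF d(1)] i len by auto
      have "map L d ! (n - i) = zw z L (Suc n) ! (n - i)" using d(2) by simp
      moreover have "int (n - i) - int (Suc n) = - int i - 1" using i by simp
      ultimately show "L (d ! (n - i)) = L (z (- int i - 1))" using i len unfolding zw_def by (simp del: upt_Suc)
    qed
    moreover have "\<forall>i<n. t (d ! (n - Suc i)) = s (d ! (n - i))"
    proof (intro allI impI)
      fix i assume i: "i < n"
      then have "Suc (n - Suc i) < length d" "Suc (n - Suc i) = n - i" using len by auto
      then show "t (d ! (n - Suc i)) = s (d ! (n - i))" using d(1) unfolding finite_path_def by metis
    qed
    ultimately show "\<exists>f. t (f 0) = u \<and> (\<forall>i<Suc n. f i \<in> E \<and> L (f i) = L (z (- int i - 1))) \<and> (\<forall>i<n. t (f (Suc i)) = s (f i))"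
      by (intro exI[where x="\<lambda>i. d ! (n - i)"]) simp
  qed
  then obtain b where b: "t (b 0) = u" "\<And>i. b i \<in> E" "\<And>i. L (b i) = L (z (- int i - 1))" "\<And>i. t (b (Suc i)) = s (b i)"
    by blast
  show ?thesis
  proof
    fix y assume "y \<in> fol E s t L u"
    then obtain p where p: "p \<in> right_paths_from E s t u" "y = L \<circ> p"
      unfolding follower_vertex_def by blast
    have pE: "\<And>n. p n \<in> E" and pt: "\<And>n. t (p n) = s (p (Suc n))" and p0: "s (p 0) = u"
      using p(1) unfolding right_paths_from_def by auto
    define x where "x = (\<lambda>k::int. if k < 0 then b (nat (- k - 1)) else p (nat k))"
    have x: "x \<in> edge_shift E s t" unfolding edge_shift_def
    proof (intro CollectI conjI allI)
      fix k
      show "x k \<in> E" unfolding x_def using b(2) pE by simp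
      show "t (x k) = s (x (k + 1))"
      proof (cases "k < -1")
        case True
        then have "nat (- k - 1) = Suc (nat (- (k + 1) - 1))" by simp
        then show ?thesis using True b(4) unfolding x_def by simp
      next
        case False
        show ?thesis
        proof (cases "k = -1")
          case True
          then show ?thesis unfolding x_def using b(1) p0 by simp
        next
          case False
          then have "0 \<le> k" using \<open>\<not> k < -1\<close> by simp
          moreover have "nat (k + 1) = Suc (nat k)" using calculation by simp
          ultimately show ?thesis unfolding x_def using pt by simp
        qed
      qed
    qed
    have Lx: "L \<circ> x \<in> label_shift E s t L" using x unfolding label_shift_def by blast
    have "glue (L \<circ> z) y = L \<circ> x"
    proof
      fix k
      show "glue (L \<circ> z) y k = (L \<circ> x) k"
      proof (cases "k < 0")
        case True
        have "- int (nat (- k - 1)) - 1 = k" using True by simp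
        then show ?thesis using True b(3)[of "nat (- k - 1)"] unfolding glue_def x_def by simp
      next
        case False
        then show ?thesis unfolding glue_def x_def p(2) by simp
      qed
    qed
    moreover have "y \<in> right_part (label_shift E s t L)"
    proof -
      have "y = (\<lambda>n. (L \<circ> x) (int n))" unfolding x_def p(2) by auto
      then show ?thesis unfolding right_part_def using Lx by blast
    qed
    ultimately have "y \<in> follower_point (label_shift E s t L) (L \<circ> z)"
      unfolding follower_point_def using Lx by simp
    then show "y \<in> fol E s t L (t (z (-1)))" using reg by simp
  qed
qed

lemma zw_mono:
  assumes "0 < n" "n \<le> m"
  shows "Tset E s t L (zw z L m) \<subseteq> Tset E s t L (zw z L n)"
proof
  fix u assume "u \<in> Tset E s t L (zw z L m)"
  then obtain d where d: "finite_path E s t d" "map L d = zw z L m" "u = t (last d)"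
    unfolding Tset_def by blast
  have len: "length d = m" using d(2) unfolding zw_def by (metis length_map length_upt minus_nat.diff_0)
  define d' where "d' = drop (m - n) d"
  have lt: "m - n < length d" using len assms by simp
  have "finite_path E s t d'" unfolding d'_def using fp_drop[OF d(1) lt] .
  moreover have "map L d' = zw z L n"
  proof (rule nth_equalityI)
    show "length (map L d') = length (zw z L n)" using len assms unfolding d'_def zw_def by simp
    fix i assume "i < length (map L d')"
    then have i: "i < n" using len assms unfolding d'_def by simp
    have "map L d' ! i = map L d ! (m - n + i)" unfolding d'_def using i len assms by simp
    also have "\<dots> = zw z L m ! (m - n + i)" using d(2) by simp
    also have "\<dots> = L (z (int (m - n + i) - int m))" unfolding zw_def using i assms by simp
    also have "\<dots> = L (z (int i - int n))" using assms by (simp add: of_nat_diff)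
    also have "\<dots> = zw z L n ! i" unfolding zw_def using i by simp
    finally show "map L d' ! i = zw z L n ! i" .
  qed
  moreover have "t (last d') = u" using d(3) lt unfolding d'_def by (simp add: last_drop)
  ultimately show "u \<in> Tset E s t L (zw z L n)" unfolding Tset_def by blast
qed

lemma claimA:
  assumes lg: "labeled_graph V E s t L" and z: "z \<in> edge_shift E s t"
    and reg: "fol E s t L (t (z (-1))) = follower_point (label_shift E s t L) (L \<circ> z)"
  shows "\<exists>N>0. \<forall>u\<in>Tset E s t L (zw z L N). fol E s t L u \<subseteq> fol E s t L (t (z (-1)))"
proof -
  have fin: "finite E" using lg unfolding labeled_graph_def by simp
  let ?G = "\<lambda>n. Tset E s t L (zw z L n)"
  define k0 where "k0 = (LEAST k. \<exists>n>0. card (?G n) = k)"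
  have ex: "\<exists>n>0. card (?G n) = card (?G 1)" by auto
  have "\<exists>n>0. card (?G n) = k0" unfolding k0_def by (rule LeastI_ex) (use ex in blast)
  then obtain N where N: "0 < N" "card (?G N) = k0" by blast
  have least: "k0 \<le> card (?G n)" if "0 < n" for n
    unfolding k0_def by (rule Least_le) (use that in blast)
  have allN: "u \<in> ?G n" if u: "u \<in> ?G N" and n: "0 < n" for u n
  proof (cases "n \<le> N")
    case True
    then show ?thesis using zw_mono[OF n True, of E s t L z] u by blast
  next
    case False
    have sub: "?G n \<subseteq> ?G N" using zw_mono[OF N(1), of n E s t L z] False by simp
    have "card (?G n) = card (?G N)" using least[OF n] N(2) card_mono[OF Tset_finite[OF lg] sub] by simp
    then have "?G n = ?G N" using card_subset_eq[OF Tset_finite[OF lg] sub] by simp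
    then show ?thesis using u by simp
  qed
  show ?thesis
  proof (intro exI[where x=N] conjI ballI)
    show "0 < N" by fact
    fix u assume "u \<in> ?G N"
    then show "fol E s t L u \<subseteq> fol E s t L (t (z (-1)))"
      using back_fol[OF fin z reg] allN by blast
  qed
qed

lemma collapse:
  assumes lg: "labeled_graph V E s t L" and rr: "right_resolving E s L"
    and fs: "follower_separated V E s t L"
  shows "card (Tset E s t L (map L g)) = K \<Longrightarrow> finite_path E s t g \<Longrightarrow>
    (\<forall>u\<in>Tset E s t L (map L g). fol E s t L u \<subseteq> fol E s t L (t (last g))) \<Longrightarrow>
    \<exists>r. finite_path E s t (g @ r) \<and> Tset E s t L (map L (g @ r)) = {t (last (g @ r))}"
proof (induction K arbitrary: g rule: less_induct)
  case (less K)
  have fin: "finite E" using lg unfolding labeled_graph_def by simp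
  define c where "c = t (last g)"
  define W where "W = map L g"
  have gne: "g \<noteq> []" using fp_nonempty[OF less.prems(2)] .
  have cin: "c \<in> Tset E s t L W" unfolding Tset_def c_def W_def using less.prems(2) by blast
  show ?case
  proof (cases "Tset E s t L W = {c}")
    case True
    then show ?thesis using less.prems(2) unfolding W_def c_def by (intro exI[where x="[]"]) simp
  next
    case False
    then obtain u where u: "u \<in> Tset E s t L W" "u \<noteq> c" using cin by blast
    have uV: "u \<in> V" and cV: "c \<in> V" using Tset_sub[OF lg] u(1) cin by blast+
    have sub: "fol E s t L u \<subseteq> fol E s t L c" using less.prems(3) u(1) unfolding W_def c_def by blast
    have "fol E s t L u \<noteq> fol E s t L c" using fs uV cV u(2) unfolding follower_separated_def by blast
    then obtain y where y: "y \<in> fol E s t L c" "y \<notin> fol E s t L u" using sub by blast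
    then obtain p where p: "p \<in> right_paths_from E s t c" "y = L \<circ> p" unfolding follower_vertex_def by blast
    have pE: "\<And>n. p n \<in> E" and pt: "\<And>n. t (p n) = s (p (Suc n))" and p0: "s (p 0) = c"
      using p(1) unfolding right_paths_from_def by auto
    obtain m where m: "0 < m" "\<not> (\<exists>d. finite_path E s t d \<and> s (hd d) = u \<and> map L d = map (L \<circ> p) [0..<m])"
      using no_extend[OF fin p(1)] y(2) p(2) by blast
    define P where "P = map (L \<circ> p) [0..<m]"
    define \<rho> where "\<rho> = map p [0..<m]"
    have f\<rho>: "finite_path E s t \<rho>" unfolding \<rho>_def using fp_of_fun[OF m(1), of p] pE pt by blast
    have \<rho>ne: "\<rho> \<noteq> []" using fp_nonempty[OF f\<rho>] .
    have h\<rho>: "s (hd \<rho>) = c" using m(1) p0 unfolding \<rho>_def by (simp add: hd_map)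
    have L\<rho>: "map L \<rho> = P" unfolding \<rho>_def P_def by simp
    have Pne: "P \<noteq> []" using L\<rho> \<rho>ne by auto
    have Wne: "W \<noteq> []" using gne W_def by simp
    define g' where "g' = g @ \<rho>"
    have fg': "finite_path E s t g'" unfolding g'_def
      by (rule fp_append[OF gne \<rho>ne, THEN iffD2]) (use less.prems(2) h\<rho> c_def f\<rho> in simp)
    have lg': "t (last g') = t (last \<rho>)" unfolding g'_def using \<rho>ne by simp
    have Lg': "map L g' = W @ P" unfolding g'_def W_def using L\<rho> by simp
    define h where "h = (\<lambda>u'. t (last (SOME d. finite_path E s t d \<and> s (hd d) = u' \<and> map L d = P)))"
    have key: "\<exists>u'\<in>Tset E s t L W - {u}. w = h u' \<and> fol E s t L w \<subseteq> fol E s t L (t (last \<rho>))"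
      if w: "w \<in> Tset E s t L (W @ P)" for w
    proof -
      obtain d where d: "finite_path E s t d" "map L d = W @ P" "w = t (last d)"
        using w unfolding Tset_def by blast
      obtain d1 d2 where dd: "d = d1 @ d2" "finite_path E s t d1" "finite_path E s t d2" "map L d1 = W"
        "map L d2 = P" "t (last d1) = s (hd d2)"
        using fp_split[OF d(1) d(2) Wne Pne] by blast
      define u' where "u' = t (last d1)"
      have u'T: "u' \<in> Tset E s t L W" unfolding Tset_def u'_def using dd by blast
      have hd2: "s (hd d2) = u'" using dd(6) u'_def by simp
      have u'u: "u' \<noteq> u"
      proof
        assume "u' = u"
        then have "finite_path E s t d2 \<and> s (hd d2) = u \<and> map L d2 = map (L \<circ> p) [0..<m]"
          using dd(3,5) hd2 P_def by simp
        then show False using m(2) by blast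
      qed
      have exd: "\<exists>d. finite_path E s t d \<and> s (hd d) = u' \<and> map L d = P" using dd(3,5) hd2 by blast
      define d' where "d' = (SOME d. finite_path E s t d \<and> s (hd d) = u' \<and> map L d = P)"
      have d': "finite_path E s t d'" "s (hd d') = u'" "map L d' = P" using someI_ex[OF exd] unfolding d'_def by blast+
      have "d' = d2" using rr_unique[OF rr d'(1) dd(3)] d'(2,3) dd(5,6) u'_def by simp
      then have hu': "h u' = t (last d2)" unfolding h_def d'_def by simp
      have d2ne: "d2 \<noteq> []" using fp_nonempty[OF dd(3)] .
      have "w = t (last d2)" using d(3) dd(1) d2ne by simp
      moreover have "fol E s t L (t (last d2)) \<subseteq> fol E s t L (t (last \<rho>))"
        by (rule fol_mono[OF rr dd(3) f\<rho>]) (use dd(5) L\<rho> dd(6) u'_def h\<rho> less.prems(3) u'T W_def c_def in auto)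
      ultimately have "w = h u' \<and> fol E s t L w \<subseteq> fol E s t L (t (last \<rho>))" using hu' by simp
      moreover have "u' \<in> Tset E s t L W - {u}" using u'T u'u by blast
      ultimately show ?thesis by blast
    qed
    have subT: "Tset E s t L (W @ P) \<subseteq> h ` (Tset E s t L W - {u})" using key by blast
    have finT: "finite (Tset E s t L W)" using Tset_finite[OF lg] .
    have "card (Tset E s t L (W @ P)) \<le> card (h ` (Tset E s t L W - {u}))"
      using card_mono[OF _ subT] finT by simp
    also have "\<dots> \<le> card (Tset E s t L W - {u})" using card_image_le finT by blast
    also have "\<dots> < card (Tset E s t L W)"
    proof -
      have "0 < card (Tset E s t L W)" using finT u(1) card_gt_0_iff by blast
      then show ?thesis using card_Diff_singleton[OF u(1)] by simp
    qed
    finally have lt: "card (Tset E s t L (map L g')) < K" using less.prems(1) Lg' W_def by simp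
    have inv: "\<forall>w\<in>Tset E s t L (map L g'). fol E s t L w \<subseteq> fol E s t L (t (last g'))"
      using key Lg' lg' by auto
    obtain r' where r': "finite_path E s t (g' @ r')" "Tset E s t L (map L (g' @ r')) = {t (last (g' @ r'))}"
      using less.IH[OF lt refl fg' inv] by blast
    then show ?thesis unfolding g'_def by (intro exI[where x="\<rho> @ r'"]) simp
  qed
qed

lemma es_step: "x \<in> edge_shift E s t \<Longrightarrow> t (x k) = s (x (k + 1))"
  unfolding edge_shift_def by blast

lemma es_E: "x \<in> edge_shift E s t \<Longrightarrow> x k \<in> E"
  unfolding edge_shift_def by blast

lemma es_path_reach:
  assumes x: "x \<in> edge_shift E s t" and n: "0 < n"
  shows "reach E s t (s (x i)) (s (x (i + int n)))"
proof -
  define g where "g = map (\<lambda>k. x (i + int k)) [0..<n]"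
  have "finite_path E s t g" unfolding g_def using edge_shift_fp[OF x n] .
  moreover have "s (hd g) = s (x i)" unfolding g_def using n by (simp add: hd_map)
  moreover have "t (last g) = s (x (i + int n))"
  proof -
    have "last g = x (i + int (n - 1))" unfolding g_def using n by (simp add: last_map)
    moreover have "i + int (n - 1) + 1 = i + int n" using n by simp
    ultimately show ?thesis using es_step[OF x, of "i + int (n - 1)"] by simp
  qed
  ultimately show ?thesis unfolding reach_def by blast
qed

lemma reach_back:
  assumes lg: "labeled_graph V E s t L" and reg: "regular_graph V E s t L"
    and tc: "terminal_component V E s t C" and vC: "v \<in> C" and cV: "c \<in> V"
    and r: "reach E s t v c"
  shows "reach E s t c v"
proof -
  obtain z where z: "z \<in> edge_shift E s t" "t (z (-1)) = c"
    using reg cV unfolding regular_graph_def regular_vertex_def by blast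
  have c0: "s (z 0) = c" using es_step[OF z(1), of "-1"] z(2) by simp
  define q where "q = (\<lambda>k::nat. s (z (int k)))"
  have VV: "\<forall>e\<in>E. s e \<in> V \<and> t e \<in> V" "finite V" using lg unfolding labeled_graph_def by auto
  have qV: "q ` {0..card V} \<subseteq> V" unfolding q_def using VV(1) es_E[OF z(1)] by blast
  have "\<not> inj_on q {0..card V}"
  proof
    assume "inj_on q {0..card V}"
    then have "card {0..card V} \<le> card V" using card_inj_on_le[OF _ qV VV(2)] by blast
    then show False by simp
  qed
  then obtain i j where ij: "i \<in> {0..card V}" "j \<in> {0..card V}" "i \<noteq> j" "q i = q j"
    unfolding inj_on_def by blast
  obtain a b where ab: "a < b" "q a = q b"
    using ij by (metis linorder_neqE_nat)
  define rv where "rv = q a"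
  have rvV: "rv \<in> V" unfolding rv_def q_def using VV(1) es_E[OF z(1)] by blast
  have rec: "recurrent V E s t rv"
  proof -
    have "\<exists>g. finite_path E s t g \<and> s (hd g) = rv \<and> t (last g) = rv"
    proof -
      define g where "g = map (\<lambda>k. z (int a + int k)) [0..<b - a]"
      have ba: "0 < b - a" using ab(1) by simp
      have "finite_path E s t g" unfolding g_def using edge_shift_fp[OF z(1) ba] .
      moreover have "s (hd g) = rv" unfolding g_def rv_def q_def using ba by (simp add: hd_map)
      moreover have "t (last g) = rv"
      proof -
        have "last g = z (int a + int (b - a - 1))" unfolding g_def using ba by (simp add: last_map)
        moreover have "int a + int (b - a - 1) + 1 = int b" using ba by simp
        ultimately show ?thesis using es_step[OF z(1), of "int a + int (b - a - 1)"] ab(2)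
          unfolding rv_def q_def by simp
      qed
      ultimately show ?thesis by blast
    qed
    then show ?thesis unfolding recurrent_def using rvV by blast
  qed
  have crv: "reach E s t c rv"
  proof (cases "a = 0")
    case True
    then show ?thesis unfolding rv_def q_def reach_def using c0 by simp
  next
    case False
    then show ?thesis using es_path_reach[OF z(1), of a 0] c0 unfolding rv_def q_def by simp
  qed
  define D where "D = {w. recurrent V E s t w \<and> reach E s t rv w \<and> reach E s t w rv}"
  have compD: "component V E s t D" unfolding component_def D_def using rec by blast
  have rvD: "rv \<in> D" unfolding D_def using rec by (simp add: reach_def)
  have vrv: "reach E s t v rv" using reach_trans[OF r crv] .
  have "D = C" using tc compD rvD vC vrv unfolding terminal_component_def by blast
  then have rvC: "rv \<in> C" using rvD by simp
  obtain v0 where v0: "C = {w. recurrent V E s t w \<and> reach E s t v0 w \<and> reach E s t w v0}"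
    using tc unfolding terminal_component_def component_def by blast
  have "reach E s t rv v0" "reach E s t v0 v" using rvC vC v0 by blast+
  then show ?thesis using reach_trans crv by metis
qed

lemma splice_word:
  assumes z: "z \<in> edge_shift E s t" and N: "0 < N"
    and r: "r = [] \<or> (finite_path E s t r \<and> s (hd r) = t (z (-1)) \<and> t (last r) = t (z (-1)))"
  shows "is_word (label_shift E s t L) (map L (map (\<lambda>k. z (- int N + int k)) [0..<N] @ r))"
proof -
  define n where "n = length r"
  define x where "x = (\<lambda>k::int. if k < 0 then z k else if k < int n then r ! nat k else z (k - int n))"
  have zstep: "\<And>k. t (z k) = s (z (k + 1))" using es_step[OF z] .
  have x: "x \<in> edge_shift E s t" unfolding edge_shift_def
  proof (intro CollectI conjI allI)
    fix k
    show "x k \<in> E"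
    proof (cases "0 \<le> k \<and> k < int n")
      case True
      then have "r \<noteq> []" "nat k < length r" using n_def by auto
      then have "r ! nat k \<in> E" using r fp_set by (metis nth_mem subsetD)
      then show ?thesis using True unfolding x_def by simp
    next
      case False
      then show ?thesis unfolding x_def using es_E[OF z] by auto
    qed
    show "t (x k) = s (x (k + 1))"
    proof (cases "k < -1")
      case True
      then show ?thesis unfolding x_def using zstep by simp
    next
      case False
      show ?thesis
      proof (cases "k = -1")
        case km: True
        show ?thesis
        proof (cases "r = []")
          case True
          then show ?thesis unfolding x_def n_def using km zstep[of "-1"] by simp
        next
          case False
          then have "0 < n" "s (hd r) = t (z (-1))" using r n_def by auto
          then show ?thesis unfolding x_def using km False by (simp add: hd_conv_nth)
        qed
      next
        case False
        then have k0: "0 \<le> k" using \<open>\<not> k < -1\<close> by simp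
        show ?thesis
        proof (cases "k + 1 < int n")
          case True
          then have rf: "finite_path E s t r" using r n_def k0 by auto
          have "Suc (nat k) < length r" using True k0 n_def by simp
          then have "t (r ! nat k) = s (r ! Suc (nat k))" using rf unfolding finite_path_def by blast
          moreover have "nat (k + 1) = Suc (nat k)" using k0 by simp
          ultimately show ?thesis unfolding x_def using True k0 by simp
        next
          case False
          show ?thesis
          proof (cases "k + 1 = int n")
            case True
            then have rne: "r \<noteq> []" using n_def k0 by auto
            then have tl: "t (last r) = t (z (-1))" using r by auto
            have "nat k = length r - 1" using True n_def k0 by simp
            then have "last r = r ! nat k" using rne by (simp add: last_conv_nth)
            then have "t (x k) = t (z (-1))" unfolding x_def using True k0 tl by simp
            moreover have "x (k + 1) = z 0" unfolding x_def using True by simp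
            ultimately show ?thesis using zstep[of "-1"] by simp
          next
            case False
            then have "\<not> k < int n" using \<open>\<not> k + 1 < int n\<close> by simp
            then show ?thesis unfolding x_def using k0 zstep[of "k - int n"] by (simp add: algebra_simps)
          qed
        qed
      qed
    qed
  qed
  have "map L (map (\<lambda>k. z (- int N + int k)) [0..<N] @ r) =
        map (\<lambda>k. (L \<circ> x) (- int N + int k)) [0..<length (map L (map (\<lambda>k. z (- int N + int k)) [0..<N] @ r))]"
  proof (rule nth_equalityI)
    show "length (map L (map (\<lambda>k. z (- int N + int k)) [0..<N] @ r)) =
        length (map (\<lambda>k. (L \<circ> x) (- int N + int k)) [0..<length (map L (map (\<lambda>k. z (- int N + int k)) [0..<N] @ r))])"
      by simp
    fix k assume k: "k < length (map L (map (\<lambda>k. z (- int N + int k)) [0..<N] @ r))"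
    then have kk: "k < N + n" using n_def by simp
    show "map L (map (\<lambda>k. z (- int N + int k)) [0..<N] @ r) ! k =
        map (\<lambda>k. (L \<circ> x) (- int N + int k)) [0..<length (map L (map (\<lambda>k. z (- int N + int k)) [0..<N] @ r))] ! k"
    proof (cases "k < N")
      case True
      then show ?thesis using k unfolding x_def by (simp add: nth_append)
    next
      case False
      then have e1: "int k - int N = int (k - N)" by simp
      have e2: "k - N < n" using kk False by simp
      have e3: "int k - int N < int n" unfolding e1 using e2 by simp
      have e4: "nat (int k - int N) = k - N" unfolding e1 by simp
      show ?thesis using k False e3 e4 unfolding x_def n_def by (simp add: nth_append)
    qed
  qed
  moreover have "L \<circ> x \<in> label_shift E s t L" using x unfolding label_shift_def by blast
  ultimately show ?thesis unfolding is_word_def by blast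
qed

lemma fp_append_D:
  assumes "finite_path E s t (g @ r)" "g \<noteq> []" "r \<noteq> []"
  shows "finite_path E s t g" "finite_path E s t r" "s (hd r) = t (last g)"
  using fp_append[OF assms(2,3), of E s t] assms(1) by auto

theorem lemma2p21:
  fixes V :: "'v set" and E :: "'e set" and s t :: "'e \<Rightarrow> 'v" and L :: "'e \<Rightarrow> 'a"
    and C :: "'v set" and v :: 'v
  assumes "labeled_graph V E s t L"
    and "right_resolving E s L"
    and "regular_graph V E s t L"
    and "follower_separated V E s t L"
    and "terminal_component V E s t C"
    and "v \<in> C"
  shows "\<exists>\<gamma>. finite_path E s t \<gamma> \<and> t (last \<gamma>) = v \<and>
           synchronizing (label_shift E s t L) (map L \<gamma>)"
proof -
  note lg = assms(1) and rr = assms(2) and reg = assms(3) and fs = assms(4) and tc = assms(5) and vC = assms(6)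
  have vV: "v \<in> V" using tc vC unfolding terminal_component_def component_def recurrent_def by blast
  obtain z where z: "z \<in> edge_shift E s t" "t (z (-1)) = v"
    "fol E s t L v = follower_point (label_shift E s t L) (L \<circ> z)"
    using reg vV unfolding regular_graph_def regular_vertex_def by blast
  have regz: "fol E s t L (t (z (-1))) = follower_point (label_shift E s t L) (L \<circ> z)" using z by simp
  obtain N where N: "0 < N" "\<forall>u\<in>Tset E s t L (zw z L N). fol E s t L u \<subseteq> fol E s t L (t (z (-1)))"
    using claimA[OF lg z(1) regz] by blast
  define g0 where "g0 = map (\<lambda>k. z (- int N + int k)) [0..<N]"
  have fg0: "finite_path E s t g0" unfolding g0_def using edge_shift_fp[OF z(1) N(1)] .
  have g0ne: "g0 \<noteq> []" using fp_nonempty[OF fg0] .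
  have Lg0: "map L g0 = zw z L N" unfolding g0_def zw_def by simp
  have tg0: "t (last g0) = v"
  proof -
    have "last g0 = z (- int N + int (N - 1))" unfolding g0_def using N(1) by (simp add: last_map)
    moreover have "- int N + int (N - 1) = -1" using N(1) by simp
    ultimately show ?thesis using z(2) by simp
  qed
  obtain r where r: "finite_path E s t (g0 @ r)" "Tset E s t L (map L (g0 @ r)) = {t (last (g0 @ r))}"
    using collapse[OF lg rr fs refl fg0] N(2) Lg0 tg0 z(2) by auto
  define c where "c = t (last (g0 @ r))"
  have cT: "c \<in> Tset E s t L (map L (g0 @ r))" using r(2) c_def by simp
  have cV: "c \<in> V" using Tset_sub[OF lg] cT by blast
  have vc: "reach E s t v c"
  proof (cases "r = []")
    case True
    then show ?thesis using tg0 c_def unfolding reach_def by simp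
  next
    case False
    then have "finite_path E s t r" "s (hd r) = v" "t (last r) = c"
      using fp_append_D[OF r(1) g0ne False] tg0 c_def by auto
    then show ?thesis unfolding reach_def by blast
  qed
  have cv: "reach E s t c v" using reach_back[OF lg reg tc vC cV vc] .
  have magic0: "\<And>d. finite_path E s t d \<Longrightarrow> map L d = map L (g0 @ r) \<Longrightarrow> t (last d) = c"
    using r(2) c_def unfolding Tset_def by blast
  obtain rf where rf: "finite_path E s t (g0 @ rf)" "t (last (g0 @ rf)) = v"
    "\<And>d. finite_path E s t d \<Longrightarrow> map L d = map L (g0 @ rf) \<Longrightarrow> t (last d) = v"
  proof (cases "c = v")
    case True
    then show ?thesis using that[of r] r(1) magic0 c_def by blast
  next
    case False
    then obtain \<sigma> where \<sigma>: "finite_path E s t \<sigma>" "s (hd \<sigma>) = c" "t (last \<sigma>) = v"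
      using cv unfolding reach_def by blast
    have \<sigma>ne: "\<sigma> \<noteq> []" using fp_nonempty[OF \<sigma>(1)] .
    have gne: "g0 @ r \<noteq> []" using g0ne by simp
    have f: "finite_path E s t ((g0 @ r) @ \<sigma>)"
      by (rule fp_append[OF gne \<sigma>ne, THEN iffD2]) (use r(1) \<sigma> c_def in simp)
    have m: "t (last d) = v" if d: "finite_path E s t d" "map L d = map L (g0 @ r @ \<sigma>)" for d
    proof -
      have "map L d = map L (g0 @ r) @ map L \<sigma>" using d(2) by simp
      moreover have "map L (g0 @ r) \<noteq> []" "map L \<sigma> \<noteq> []" using gne \<sigma>ne by auto
      ultimately obtain d1 d2 where dd: "d = d1 @ d2" "finite_path E s t d1" "finite_path E s t d2"
        "map L d1 = map L (g0 @ r)" "map L d2 = map L \<sigma>" "t (last d1) = s (hd d2)"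
        using fp_split[OF d(1)] by blast
      have "t (last d1) = c" using magic0[OF dd(2,4)] .
      then have "d2 = \<sigma>" using rr_unique[OF rr dd(3) \<sigma>(1)] dd(5,6) \<sigma>(2) by simp
      then show ?thesis using dd(1) \<sigma>ne \<sigma>(3) by simp
    qed
    show ?thesis using that[of "r @ \<sigma>"] f m \<sigma>(3) \<sigma>ne by simp
  qed
  have rfc: "rf = [] \<or> (finite_path E s t rf \<and> s (hd rf) = t (z (-1)) \<and> t (last rf) = t (z (-1)))"
  proof (cases "rf = []")
    case False
    then show ?thesis using fp_append_D[OF rf(1) g0ne False] rf(2) tg0 z(2) by simp
  qed simp
  have isw: "is_word (label_shift E s t L) (map L (g0 @ rf))"
    unfolding g0_def using splice_word[OF z(1) N(1) rfc] by simp
  have "synchronizing (label_shift E s t L) (map L (g0 @ rf))"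
    by (rule sync_magic[where w=v]) (use g0ne rf(3) isw in auto)
  then show ?thesis using rf(1,2) by blast
qed


end
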